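(* Let $\Gamma$ be a single-player extensive-form game with no chance nodes and no absentmindedness. Then $\mathrm{VoR}^{\mathrm{opt}}(\Gamma)=1$. Further, both $\Gamma$ and $\mathrm{pr}_1(\Gamma)$ admit a pure optimal strategy.
   Context: A single-player extensive-form game consists of a finite rooted tree (nodes $\mathcal H$, leaves $\mathcal Z$, actions $A_h$), nonterminal nodes belonging to Player 1 or to chance, utility $u_1:\mathcal Z\to\mathbb R_{\ge0}$, and a partition of Player 1's nodes into infosets with common action sets $A_I$. For a node $h$, $\mathrm{obs}(h)=(i_k,I_k,a_k)_k$ lists the player, infoset and action taken along the root-to-$h$ path (excluding $h$); $\mathrm{obs}_1(h)$ is its restriction to Player 1. The game has absentmindedness if some infoset appears more than once among the $I_k$ of $\mathrm{obs}(h)$ for some $h$. $\mathrm{pr}_1(\Gamma)$ has the same tree and utilities, with each infoset partitioned into classes of $h\sim h'\iff\mathrm{obs}_1(h)=\mathrm{obs}_1(h')$. A behavioral strategy $\pi$ assigns $\pi(\cdot\mid I)\in\Delta(A_I)$ to each infoset; it is pure if each is a point mass. $U_1(\pi)$ is the expected utility; an optimal strategy maximizes $U_1$, with value $u_1(\mathrm{opt}(\cdot))$. $\mathrm{VoR}^{\mathrm{opt}}(\Gamma)=u_1(\mathrm{opt}(\mathrm{pr}_1(\Gamma)))/u_1(\mathrm{opt}(\Gamma))$. *)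

theory Defs
  imports Complex_Main
begin

text \<open>Nodes are histories (lists of actions)
  from the root; the tree is the finite, prefix-closed set of nodes containing the root [].\<close>

record ('a, 'i) efg =
  nodes     :: "'a list set"
  is_chance :: "'a list \<Rightarrow> bool"
  chance_pr :: "'a list \<Rightarrow> 'a \<Rightarrow> real"
  infoset   :: "'a list \<Rightarrow> 'i"
  util      :: "'a list \<Rightarrow> real"

definition acts :: "('a, 'i) efg \<Rightarrow> 'a list \<Rightarrow> 'a set" where
  "acts G h = {a. h @ [a] \<in> nodes G}"

definition leaves :: "('a, 'i) efg \<Rightarrow> 'a list set" where
  "leaves G = {z \<in> nodes G. acts G z = {}}"

definition p1_nodes :: "('a, 'i) efg \<Rightarrow> 'a list set" where
  "p1_nodes G = {h \<in> nodes G. acts G h \<noteq> {} \<and> \<not> is_chance G h}"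

definition chance_nodes :: "('a, 'i) efg \<Rightarrow> 'a list set" where
  "chance_nodes G = {h \<in> nodes G. acts G h \<noteq> {} \<and> is_chance G h}"

definition wf_game :: "('a, 'i) efg \<Rightarrow> bool" where
  "wf_game G \<longleftrightarrow>
     finite (nodes G) \<and> [] \<in> nodes G \<and>
     (\<forall>h a. h @ [a] \<in> nodes G \<longrightarrow> h \<in> nodes G) \<and>
     (\<forall>z \<in> leaves G. util G z \<ge> 0) \<and>
     (\<forall>h \<in> chance_nodes G. (\<forall>a \<in> acts G h. chance_pr G h a \<ge> 0) \<and>
                           (\<Sum>a \<in> acts G h. chance_pr G h a) = 1) \<and>
     (\<forall>h \<in> p1_nodes G. \<forall>h' \<in> p1_nodes G. infoset G h = infoset G h' \<longrightarrow> acts G h = acts G h')"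

definition behavioral :: "('a, 'i) efg \<Rightarrow> ('i \<Rightarrow> 'a \<Rightarrow> real) \<Rightarrow> bool" where
  "behavioral G \<pi> \<longleftrightarrow>
     (\<forall>h \<in> p1_nodes G. (\<forall>a \<in> acts G h. \<pi> (infoset G h) a \<ge> 0) \<and>
                      (\<Sum>a \<in> acts G h. \<pi> (infoset G h) a) = 1)"

definition pure :: "('a, 'i) efg \<Rightarrow> ('i \<Rightarrow> 'a \<Rightarrow> real) \<Rightarrow> bool" where
  "pure G \<pi> \<longleftrightarrow> behavioral G \<pi> \<and>
     (\<forall>h \<in> p1_nodes G. \<exists>a \<in> acts G h. \<forall>b \<in> acts G h. \<pi> (infoset G h) b = (if b = a then 1 else 0))"

definition reach :: "('a, 'i) efg \<Rightarrow> ('i \<Rightarrow> 'a \<Rightarrow> real) \<Rightarrow> 'a list \<Rightarrow> real" where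
  "reach G \<pi> z = (\<Prod>k < length z.
      if is_chance G (take k z) then chance_pr G (take k z) (z ! k)
      else \<pi> (infoset G (take k z)) (z ! k))"

definition U1 :: "('a, 'i) efg \<Rightarrow> ('i \<Rightarrow> 'a \<Rightarrow> real) \<Rightarrow> real" where
  "U1 G \<pi> = (\<Sum>z \<in> leaves G. reach G \<pi> z * util G z)"

definition optimal :: "('a, 'i) efg \<Rightarrow> ('i \<Rightarrow> 'a \<Rightarrow> real) \<Rightarrow> bool" where
  "optimal G \<pi> \<longleftrightarrow> behavioral G \<pi> \<and> (\<forall>\<pi>'. behavioral G \<pi>' \<longrightarrow> U1 G \<pi>' \<le> U1 G \<pi>)"

definition opt_val :: "('a, 'i) efg \<Rightarrow> real" where
  "opt_val G = Sup {U1 G \<pi> | \<pi>. behavioral G \<pi>}"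

definition obs1 :: "('a, 'i) efg \<Rightarrow> 'a list \<Rightarrow> ('i \<times> 'a) list" where
  "obs1 G h = map (\<lambda>k. (infoset G (take k h), h ! k))
                  (filter (\<lambda>k. take k h \<in> p1_nodes G) [0..<length h])"

definition no_chance :: "('a, 'i) efg \<Rightarrow> bool" where
  "no_chance G \<longleftrightarrow> chance_nodes G = {}"

definition absentminded :: "('a, 'i) efg \<Rightarrow> bool" where
  "absentminded G \<longleftrightarrow> (\<exists>h \<in> nodes G. \<exists>k l. k < l \<and> l < length h \<and>
      take k h \<in> p1_nodes G \<and> take l h \<in> p1_nodes G \<and>
      infoset G (take k h) = infoset G (take l h))"

text \<open>Perfect-recall refinement: h ~ h' iff same infoset and same obs_1.\<close>
definition pr1 :: "('a, 'i) efg \<Rightarrow> ('a, 'i \<times> ('i \<times> 'a) list) efg" where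
  "pr1 G = \<lparr> nodes = nodes G, is_chance = is_chance G, chance_pr = chance_pr G,
             infoset = (\<lambda>h. (infoset G h, obs1 G h)), util = util G \<rparr>"

definition VoR_opt :: "('a, 'i) efg \<Rightarrow> real" where
  "VoR_opt G = opt_val (pr1 G) / opt_val G"

end

theory Submission
  imports Defs "HOL-Library.Sublist"
begin

lemma take_node:
  assumes "wf_game H" "h \<in> nodes H"
  shows "take n h \<in> nodes H"
  using assms(2)
proof (induction h arbitrary: n rule: rev_induct)
  case Nil
  then show ?case by simp
next
  case (snoc x xs)
  have xs: "xs \<in> nodes H" using snoc.prems assms(1) unfolding wf_game_def by blast
  show ?case
  proof (cases "n \<le> length xs")
    case True
    then show ?thesis using snoc.IH[OF xs] by simp
  next
    case False
    then show ?thesis using snoc.prems by simp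
  qed
qed

lemma prefix_node:
  assumes "wf_game H" "h \<in> nodes H" "prefix p h"
  shows "p \<in> nodes H"
proof -
  obtain w where "h = p @ w" using assms(3) unfolding prefix_def by blast
  then have "p = take (length p) h" by simp
  then show ?thesis using take_node[OF assms(1,2)] by metis
qed

lemma path_info:
  assumes "wf_game H" "no_chance H" "h \<in> nodes H" "k < length h"
  shows "take k h \<in> p1_nodes H \<and> h ! k \<in> acts H (take k h) \<and> \<not> is_chance H (take k h)"
proof -
  have "take (Suc k) h = take k h @ [h ! k]" using assms(4) by (simp add: take_Suc_conv_app_nth)
  then have "take k h @ [h ! k] \<in> nodes H" using take_node[OF assms(1,3)] by metis
  then have a: "h ! k \<in> acts H (take k h)" unfolding acts_def by simp
  have n: "take k h \<in> nodes H" using take_node[OF assms(1,3)] by blast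
  have "\<not> is_chance H (take k h)"
    using assms(2) a n unfolding no_chance_def chance_nodes_def by blast
  then show ?thesis using a n unfolding p1_nodes_def by blast
qed

lemma finite_acts:
  assumes "wf_game H"
  shows "finite (acts H h)"
proof -
  have "(\<lambda>a. h @ [a]) ` acts H h \<subseteq> nodes H" unfolding acts_def by auto
  moreover have "finite (nodes H)" using assms unfolding wf_game_def by blast
  ultimately have "finite ((\<lambda>a. h @ [a]) ` acts H h)" using finite_subset by blast
  then show ?thesis using finite_imageD inj_onI by (metis (no_types, lifting) append1_eq_conv)
qed

lemma reach_snoc:
  assumes "\<not> is_chance H h"
  shows "reach H \<pi> (h @ [a]) = reach H \<pi> h * \<pi> (infoset H h) a"
proof -
  have "(\<Prod>k<length h.
         if is_chance H (take k (h @ [a])) then chance_pr H (take k (h @ [a])) ((h @ [a]) ! k)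
         else \<pi> (infoset H (take k (h @ [a]))) ((h @ [a]) ! k)) =
        (\<Prod>k<length h.
         if is_chance H (take k h) then chance_pr H (take k h) (h ! k)
         else \<pi> (infoset H (take k h)) (h ! k))"
    by (rule prod.cong) (auto simp: nth_append)
  then show ?thesis unfolding reach_def using assms
    by (simp add: prod.lessThan_Suc nth_append)
qed

lemma leaf_prefix:
  assumes "wf_game H" "z \<in> leaves H" "z' \<in> nodes H" "prefix z z'"
  shows "z = z'"
proof (rule ccontr)
  assume ne: "z \<noteq> z'"
  obtain w where w: "z' = z @ w" using assms(4) unfolding prefix_def by blast
  then obtain c cs where "w = c # cs" using ne by (cases w) auto
  then have "prefix (z @ [c]) z'" using w by simp
  then have "z @ [c] \<in> nodes H" using prefix_node[OF assms(1,3)] by blast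
  then show False using assms(2) unfolding leaves_def acts_def by auto
qed

lemma reach_nonneg:
  assumes "wf_game H" "no_chance H" "behavioral H \<pi>" "h \<in> nodes H"
  shows "reach H \<pi> h \<ge> 0"
  unfolding reach_def
proof (rule prod_nonneg)
  fix k assume "k \<in> {..<length h}"
  then have "take k h \<in> p1_nodes H \<and> h ! k \<in> acts H (take k h) \<and> \<not> is_chance H (take k h)"
    using path_info[OF assms(1,2,4)] by simp
  then show "0 \<le> (if is_chance H (take k h) then chance_pr H (take k h) (h ! k)
              else \<pi> (infoset H (take k h)) (h ! k))"
    using assms(3) unfolding behavioral_def by auto
qed

lemma reach_sum:
  assumes wf: "wf_game H" and nc: "no_chance H" and b: "behavioral H \<pi>" and h: "h \<in> nodes H"
  shows "(\<Sum>z \<in> {z \<in> leaves H. prefix h z}. reach H \<pi> z) = reach H \<pi> h"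
proof -
  define D where "D = Max (length ` nodes H)"
  have fin: "finite (nodes H)" using wf unfolding wf_game_def by blast
  have lenD: "\<And>x. x \<in> nodes H \<Longrightarrow> length x \<le> D" unfolding D_def using fin by simp
  have finL: "\<And>P. finite {z \<in> leaves H. P z}"
    using fin unfolding leaves_def by simp
  show ?thesis using h
  proof (induction "D - length h" arbitrary: h rule: less_induct)
    case less
    show ?case
    proof (cases "acts H h = {}")
      case True
      then have hl: "h \<in> leaves H" using less.prems unfolding leaves_def by simp
      have "{z \<in> leaves H. prefix h z} = {h}"
        using leaf_prefix[OF wf hl] hl unfolding leaves_def by auto
      then show ?thesis by simp
    next
      case False
      have p1: "h \<in> p1_nodes H" using False less.prems nc
        unfolding p1_nodes_def no_chance_def chance_nodes_def by blast
      have nch: "\<not> is_chance H h" using p1 unfolding p1_nodes_def by blast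
      have eq: "{z \<in> leaves H. prefix h z} = (\<Union>a \<in> acts H h. {z \<in> leaves H. prefix (h @ [a]) z})"
      proof (intro equalityI subsetI)
        fix z assume z: "z \<in> {z \<in> leaves H. prefix h z}"
        then obtain w where w: "z = h @ w" unfolding prefix_def by blast
        have "w \<noteq> []" using z w False unfolding leaves_def by auto
        then obtain c cs where wc: "w = c # cs" by (cases w) auto
        have "prefix (h @ [c]) z" using w wc by simp
        then have "h @ [c] \<in> nodes H" using prefix_node[OF wf] z unfolding leaves_def by blast
        then have "c \<in> acts H h" unfolding acts_def by simp
        then show "z \<in> (\<Union>a \<in> acts H h. {z \<in> leaves H. prefix (h @ [a]) z})"
          using z \<open>prefix (h @ [c]) z\<close> by blast
      next
        fix z assume "z \<in> (\<Union>a \<in> acts H h. {z \<in> leaves H. prefix (h @ [a]) z})"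
        then show "z \<in> {z \<in> leaves H. prefix h z}"
          using prefix_order.trans[of h "h @ [_]" z] by (auto intro: prefix_order.trans)
      qed
      have disj: "\<forall>a \<in> acts H h. \<forall>b \<in> acts H h. a \<noteq> b \<longrightarrow>
          {z \<in> leaves H. prefix (h @ [a]) z} \<inter> {z \<in> leaves H. prefix (h @ [b]) z} = {}"
        unfolding prefix_def by auto
      have IH: "(\<Sum>z \<in> {z \<in> leaves H. prefix (h @ [a]) z}. reach H \<pi> z) = reach H \<pi> (h @ [a])"
        if a: "a \<in> acts H h" for a
      proof -
        have n: "h @ [a] \<in> nodes H" using a unfolding acts_def by simp
        have "D - length (h @ [a]) < D - length h" using lenD[OF n] by simp
        then show ?thesis using less.hyps n by blast
      qed
      have "(\<Sum>z \<in> {z \<in> leaves H. prefix h z}. reach H \<pi> z)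
          = (\<Sum>a \<in> acts H h. \<Sum>z \<in> {z \<in> leaves H. prefix (h @ [a]) z}. reach H \<pi> z)"
        unfolding eq by (rule sum.UNION_disjoint[OF finite_acts[OF wf]]) (use finL disj in auto)
      also have "\<dots> = (\<Sum>a \<in> acts H h. reach H \<pi> h * \<pi> (infoset H h) a)"
        using IH reach_snoc[OF nch] by simp
      also have "\<dots> = reach H \<pi> h * (\<Sum>a \<in> acts H h. \<pi> (infoset H h) a)"
        by (simp add: sum_distrib_left)
      also have "\<dots> = reach H \<pi> h" using b p1 unfolding behavioral_def by simp
      finally show ?thesis .
    qed
  qed
qed

lemma leaves_nonempty:
  assumes wf: "wf_game H"
  shows "leaves H \<noteq> {}" "finite (leaves H)"
proof -
  have fin: "finite (nodes H)" and r: "[] \<in> nodes H" using wf unfolding wf_game_def by blast+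
  show "finite (leaves H)" using fin unfolding leaves_def by simp
  define D where "D = Max (length ` nodes H)"
  have "D \<in> length ` nodes H" unfolding D_def using fin r by (intro Max_in) auto
  then obtain h where h: "h \<in> nodes H" "length h = D" by blast
  have "acts H h = {}"
  proof (rule ccontr)
    assume "acts H h \<noteq> {}"
    then obtain a where "h @ [a] \<in> nodes H" unfolding acts_def by blast
    then have "length (h @ [a]) \<le> D" unfolding D_def using fin by (metis Max_ge finite_imageI imageI)
    then show False using h by simp
  qed
  then show "leaves H \<noteq> {}" using h unfolding leaves_def by blast
qed

lemma U1_bound:
  assumes wf: "wf_game H" and nc: "no_chance H" and b: "behavioral H \<pi>"
  shows "U1 H \<pi> \<le> Max (util H ` leaves H)"
proof -
  let ?M = "Max (util H ` leaves H)"
  have fl: "finite (leaves H)" using leaves_nonempty[OF wf] by blast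
  have "U1 H \<pi> \<le> (\<Sum>z \<in> leaves H. reach H \<pi> z * ?M)"
    unfolding U1_def
  proof (rule sum_mono)
    fix z assume z: "z \<in> leaves H"
    have "reach H \<pi> z \<ge> 0" using reach_nonneg[OF wf nc b] z unfolding leaves_def by blast
    moreover have "util H z \<le> ?M" using fl z by simp
    ultimately show "reach H \<pi> z * util H z \<le> reach H \<pi> z * ?M" by (simp add: mult_left_mono)
  qed
  also have "\<dots> = (\<Sum>z \<in> leaves H. reach H \<pi> z) * ?M" by (simp add: sum_distrib_right)
  also have "(\<Sum>z \<in> leaves H. reach H \<pi> z) = 1"
  proof -
    have "[] \<in> nodes H" using wf unfolding wf_game_def by blast
    from reach_sum[OF wf nc b this] show ?thesis by (simp add: reach_def)
  qed
  finally show ?thesis by simp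
qed

lemma no_am:
  assumes "\<not> absentminded H" "h \<in> nodes H" "k < length h" "k' < length h"
    "take k h \<in> p1_nodes H" "take k' h \<in> p1_nodes H"
    "infoset H (take k h) = infoset H (take k' h)"
  shows "k = k'"
proof (rule ccontr)
  assume "k \<noteq> k'"
  then have "k < k' \<or> k' < k" by arith
  then show False using assms unfolding absentminded_def by metis
qed

lemma pure_from_choice:
  assumes wf: "wf_game H"
    and c: "\<forall>h \<in> p1_nodes H. \<exists>a \<in> acts H h. \<forall>b \<in> acts H h. \<pi> (infoset H h) b = (if b = a then 1 else 0)"
  shows "pure H \<pi>"
proof -
  have "behavioral H \<pi>" unfolding behavioral_def
  proof
    fix h assume h: "h \<in> p1_nodes H"
    then obtain a where a: "a \<in> acts H h" "\<forall>b \<in> acts H h. \<pi> (infoset H h) b = (if b = a then 1 else 0)"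
      using c by blast
    have "(\<Sum>b \<in> acts H h. \<pi> (infoset H h) b) = (\<Sum>b \<in> acts H h. if b = a then 1 else 0)"
      using a(2) by (intro sum.cong) auto
    also have "\<dots> = 1" using a(1) finite_acts[OF wf] by simp
    finally show "(\<forall>a\<in>acts H h. 0 \<le> \<pi> (infoset H h) a) \<and> (\<Sum>a\<in>acts H h. \<pi> (infoset H h) a) = 1"
      using a(2) by simp
  qed
  then show ?thesis unfolding pure_def using c by blast
qed

lemma pure_reach:
  assumes wf: "wf_game H" and nc: "no_chance H" and na: "\<not> absentminded H"
    and z0: "z0 \<in> leaves H"
  shows "\<exists>\<pi>. pure H \<pi> \<and> U1 H \<pi> = util H z0"
proof -
  have z0n: "z0 \<in> nodes H" using z0 unfolding leaves_def by blast
  define P where "P I = (\<exists>k<length z0. infoset H (take k z0) = I)" for I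
  define dflt where "dflt I = (SOME a. \<exists>h\<in>p1_nodes H. infoset H h = I \<and> a \<in> acts H h)" for I
  define \<pi> where "\<pi> I b = (if P I then (if (\<exists>k<length z0. infoset H (take k z0) = I \<and> z0 ! k = b) then 1 else 0)
      else (if b = dflt I then 1 else (0::real)))" for I b
  have K: "\<pi> (infoset H (take k z0)) b = (if b = z0 ! k then 1 else 0)" if k: "k < length z0" for k b
  proof -
    have "P (infoset H (take k z0))" unfolding P_def using k by blast
    moreover have "(\<exists>k'<length z0. infoset H (take k' z0) = infoset H (take k z0) \<and> z0 ! k' = b) \<longleftrightarrow> b = z0 ! k"
    proof
      assume "\<exists>k'<length z0. infoset H (take k' z0) = infoset H (take k z0) \<and> z0 ! k' = b"
      then obtain k' where k': "k' < length z0" "infoset H (take k' z0) = infoset H (take k z0)" "z0 ! k' = b" by blast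
      have "k' = k" using no_am[OF na z0n k'(1) k] k'(2) path_info[OF wf nc z0n] k k'(1) by blast
      then show "b = z0 ! k" using k' by simp
    qed (use k in blast)
    ultimately show ?thesis unfolding \<pi>_def by simp
  qed
  have "pure H \<pi>"
  proof (rule pure_from_choice[OF wf], intro ballI)
    fix h assume h: "h \<in> p1_nodes H"
    show "\<exists>a\<in>acts H h. \<forall>b\<in>acts H h. \<pi> (infoset H h) b = (if b = a then 1 else 0)"
    proof (cases "P (infoset H h)")
      case True
      then obtain k where k: "k < length z0" "infoset H (take k z0) = infoset H h" unfolding P_def by blast
      have pi: "take k z0 \<in> p1_nodes H \<and> z0 ! k \<in> acts H (take k z0) \<and> \<not> is_chance H (take k z0)"
        using path_info[OF wf nc z0n k(1)] .
      have "acts H (take k z0) = acts H h" using wf pi h k(2) unfolding wf_game_def by blast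
      then show ?thesis using pi K[OF k(1)] k(2) by metis
    next
      case False
      have ex: "\<exists>a. \<exists>h'\<in>p1_nodes H. infoset H h' = infoset H h \<and> a \<in> acts H h'"
        using h unfolding p1_nodes_def by blast
      have "\<exists>h'\<in>p1_nodes H. infoset H h' = infoset H h \<and> dflt (infoset H h) \<in> acts H h'"
        unfolding dflt_def by (rule someI_ex[OF ex])
      then obtain h' where h': "h' \<in> p1_nodes H" "infoset H h' = infoset H h" "dflt (infoset H h) \<in> acts H h'"
        by blast
      have "acts H h' = acts H h" using wf h' h unfolding wf_game_def by blast
      then show ?thesis using h' False unfolding \<pi>_def by auto
    qed
  qed
  moreover have "U1 H \<pi> = util H z0"
  proof -
    have r: "reach H \<pi> z = (if z = z0 then 1 else 0)" if z: "z \<in> leaves H" for z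
    proof (cases "z = z0")
      case True
      have "reach H \<pi> z0 = (\<Prod>k<length z0. 1)" unfolding reach_def
        using path_info[OF wf nc z0n] K by (intro prod.cong) auto
      then show ?thesis using True by simp
    next
      case False
      have zn: "z \<in> nodes H" using z unfolding leaves_def by blast
      have "\<not> prefix z z0" using leaf_prefix[OF wf z z0n] False by blast
      moreover have "\<not> prefix z0 z" using leaf_prefix[OF wf z0 zn] False by blast
      ultimately have "z \<parallel> z0" by blast
      then obtain as b bs c cs where d: "b \<noteq> c" "z = as @ b # bs" "z0 = as @ c # cs"
        using parallel_decomp by blast
      define k where "k = length as"
      have kz: "k < length z" "k < length z0" using d unfolding k_def by auto
      have tk: "take k z = as" "take k z0 = as" "z ! k = b" "z0 ! k = c" using d unfolding k_def by auto
      have "\<not> is_chance H (take k z)" using path_info[OF wf nc zn kz(1)] by blast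
      then have "(if is_chance H (take k z) then chance_pr H (take k z) (z ! k)
              else \<pi> (infoset H (take k z)) (z ! k)) = 0"
        using K[OF kz(2), of b] tk d(1) by simp
      then have "reach H \<pi> z = 0" unfolding reach_def using kz(1)
        by (subst prod_zero_iff) (auto split: if_splits)
      then show ?thesis using False by simp
    qed
    have "U1 H \<pi> = (\<Sum>z \<in> leaves H. if z = z0 then util H z else 0)"
      unfolding U1_def by (intro sum.cong) (auto simp: r)
    also have "\<dots> = util H z0" using z0 leaves_nonempty(2)[OF wf] by simp
    finally show ?thesis .
  qed
  ultimately show ?thesis by blast
qed

lemma general:
  assumes wf: "wf_game H" and nc: "no_chance H" and na: "\<not> absentminded H"
  shows "opt_val H = Max (util H ` leaves H) \<and> (\<exists>\<pi>. pure H \<pi> \<and> optimal H \<pi>)"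
proof -
  let ?M = "Max (util H ` leaves H)"
  have "?M \<in> util H ` leaves H" using leaves_nonempty[OF wf] by (intro Max_in) auto
  then obtain z0 where z0: "z0 \<in> leaves H" "util H z0 = ?M" by auto
  obtain \<pi> where p: "pure H \<pi>" "U1 H \<pi> = ?M" using pure_reach[OF wf nc na z0(1)] z0(2) by metis
  have b: "behavioral H \<pi>" using p unfolding pure_def by blast
  have opt: "optimal H \<pi>" unfolding optimal_def using b p(2) U1_bound[OF wf nc] by simp
  have "opt_val H = ?M" unfolding opt_val_def
  proof (rule cSup_eq_maximum)
    have "?M = U1 H \<pi> \<and> behavioral H \<pi>" using b p(2) by simp
    then show "?M \<in> {U1 H \<pi> |\<pi>. behavioral H \<pi>}" by blast
    show "\<And>x. x \<in> {U1 H \<pi> |\<pi>. behavioral H \<pi>} \<Longrightarrow> x \<le> ?M" using U1_bound[OF wf nc] by blast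
  qed
  then show ?thesis using p opt by blast
qed

theorem proposition6:
  fixes G :: "('a, 'i) efg"
  assumes "wf_game G" and "no_chance G" and "\<not> absentminded G"
  shows "opt_val (pr1 G) = opt_val G \<and> (opt_val G \<noteq> 0 \<longrightarrow> VoR_opt G = 1) \<and>
         (\<exists>\<pi>. pure G \<pi> \<and> optimal G \<pi>) \<and>
         (\<exists>\<pi>. pure (pr1 G) \<pi> \<and> optimal (pr1 G) \<pi>)"
proof -
  have acts: "acts (pr1 G) = acts G" unfolding acts_def pr1_def by (intro ext) simp
  have lv: "leaves (pr1 G) = leaves G" unfolding leaves_def acts by (simp add: pr1_def)
  have p1: "p1_nodes (pr1 G) = p1_nodes G" unfolding p1_nodes_def acts by (simp add: pr1_def)
  have cn: "chance_nodes (pr1 G) = chance_nodes G" unfolding chance_nodes_def acts by (simp add: pr1_def)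
  have inf2: "infoset (pr1 G) h = infoset (pr1 G) h' \<Longrightarrow> infoset G h = infoset G h'" for h h'
    by (simp add: pr1_def)
  have nd: "nodes (pr1 G) = nodes G" "util (pr1 G) = util G" "chance_pr (pr1 G) = chance_pr G"
    by (simp_all add: pr1_def)
  have wf2: "wf_game (pr1 G)"
  proof -
    have A: "finite (nodes G) \<and> [] \<in> nodes G \<and>
     (\<forall>h a. h @ [a] \<in> nodes G \<longrightarrow> h \<in> nodes G) \<and>
     (\<forall>z \<in> leaves G. util G z \<ge> 0) \<and>
     (\<forall>h \<in> chance_nodes G. (\<forall>a \<in> acts G h. chance_pr G h a \<ge> 0) \<and>
                           (\<Sum>a \<in> acts G h. chance_pr G h a) = 1) \<and>
     (\<forall>h \<in> p1_nodes G. \<forall>h' \<in> p1_nodes G. infoset G h = infoset G h' \<longrightarrow> acts G h = acts G h')"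
      using assms(1) unfolding wf_game_def by blast
    have B: "\<forall>h \<in> p1_nodes G. \<forall>h' \<in> p1_nodes G. infoset (pr1 G) h = infoset (pr1 G) h' \<longrightarrow> acts G h = acts G h'"
      using A inf2 by blast
    show ?thesis unfolding wf_game_def lv p1 cn acts nd using A B by blast
  qed
  have nc2: "no_chance (pr1 G)" using assms(2) unfolding no_chance_def cn .
  have na2: "\<not> absentminded (pr1 G)" using assms(3) inf2 unfolding absentminded_def p1 nd
    by blast
  have ut: "util (pr1 G) = util G" by (simp add: pr1_def)
  note g1 = general[OF assms] and g2 = general[OF wf2 nc2 na2]
  have eq: "opt_val (pr1 G) = opt_val G" using g1 g2 lv ut by simp
  show ?thesis using g1 g2 eq unfolding VoR_opt_def by simp
qed

end
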